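(* Let $N\ge 1$, $l>0$, $\Delta\tau>0$, $L>(N+1)l$ and $v_{0,\min}\le v_{0,\max}$, and consider the platoon system with state $y=(\tilde x_1,\tilde v_1,\dots,\tilde x_N,\tilde v_N,v_0)\in\mathbb{R}^{2N+1}$, input $u=(u_0,\dots,u_N)\in\mathbb{U}$ and disturbance $w\in\mathbb{W}$: $$\tilde x_i^+=\tilde x_i+\tilde v_i\Delta\tau+(u_0-u_i)\tfrac{\Delta\tau^2}{2}+w_{0,x}-w_{i,x},\quad \tilde v_i^+=\tilde v_i+(u_0-u_i)\Delta\tau+w_{0,v}-w_{i,v}\ (i=1,\dots,N),\quad v_0^+=v_0+u_0\Delta\tau+w_{0,v}.$$ Let $\Omega_0,\dots,\Omega_N$, $I_0,\dots,I_N$, $J_{i,x},J_{i,v}$ be as in the context, and let $\mu_i:\Omega_i\to I_i$ ($i=1,\dots,N$) and $\mu_0:\Omega_0\to I_0$ be invariance-inducing maps as defined in the context. Define, on $\Omega=\{y:(\tilde x_i,\tilde v_i)\in\Omega_i\ (i=1,\dots,N),\ v_0\in\Omega_0\}$, the feedback $u=\mu(y)$ by $u_0=\mu_0(v_0)$ and $u_i=\mu_0(v_0)-\mu_i(\tilde x_i,\tilde v_i)$ for $i=1,\dots,N$. Then $\mu(y)\in\mathbb{U}$ for all $y\in\Omega$, and for every initial state $y(0)\in\Omega$ and every disturbance sequence $(w(k))_{k\ge0}$ with $w(k)\in\mathbb{W}$, the closed-loop trajectory $y(k+1)=$ (platoon update with $u=\mu(y(k))$, $w=w(k)$) satisfies,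 for all $k\ge 0$: $\tilde x_i(k)\ge\tilde x_{i-1}(k)+l$ for $i=1,\dots,N$ (with $\tilde x_0:=0$), $\tilde x_N(k)\le L$, and $v_0(k)\in[v_{0,\min},v_{0,\max}]$. That is, $\mu$ solves the safe platoon control problem (belongs to the set $\mathbb{M}$ of control policies guaranteeing these constraints for all times and all admissible disturbances).
   Context: A platoon consists of $N+1$ vehicles indexed $0$ (the leader) to $N$, all of length $l$. Vehicle $i$ has absolute position $x_i$, velocity $v_i$, control input $u_i$ and additive disturbances $w_{i,x},w_{i,v}$, with dynamics $x_i^+=x_i+v_i\Delta\tau+u_i\frac{\Delta\tau^2}{2}+w_{i,x}$, $v_i^+=v_i+u_i\Delta\tau+w_{i,v}$. Admissible inputs: $\mathbb{U}=\prod_{i=0}^N[u_{i,\min},u_{i,\max}]$; admissible disturbances: $w=(w_{i,s})\in\mathbb{W}=\prod_{i=0}^N[w_{i,x,\min},w_{i,x,\max}]\times[w_{i,v,\min},w_{i,v,\max}]$. Relative coordinates are $\tilde x_i=x_0-x_i$, $\tilde v_i=v_0-v_i$. Envelope sets: for $i=1,\dots,N$, $\mathbb{S}_i=\{(\tilde x_i,\tilde v_i)\in\mathbb{R}^2 : il+(i-1)\frac{L-Nl}{N}\le\tilde x_i\le il+i\frac{L-Nl}{N}\}$, and $\mathbb{S}_0=[v_{0,\min},v_{0,\max}]$. Relative inputs and disturbances: $\tilde u_0=u_0$, $\tilde u_i=u_0-u_i$, $\tilde w_{0,s}=w_{0,s}$, $\tilde w_{i,s}=w_{0,s}-w_{i,s}$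 ($s=x,v$). Let $\mathcal{U}=\{\tilde u:u\in\mathbb{U}\}$, $\mathcal{W}=\{\tilde w:w\in\mathbb{W}\}$. $\prod_{i=0}^N I_i$ is any hyper-rectangle contained in $\mathcal{U}$, and $\prod_{i=0}^N J_{i,x}\times J_{i,v}$ is any hyper-rectangle containing $\mathcal{W}$. For $i=1,\dots,N$, $\Omega_i\subseteq\mathbb{S}_i$, and $\mu_i:\Omega_i\to I_i$ satisfies: for every $(\tilde x,\tilde v)\in\Omega_i$, with $\tilde u=\mu_i(\tilde x,\tilde v)$, one has $(\tilde x+\tilde v\Delta\tau+\tilde u\frac{\Delta\tau^2}{2}+\omega_x,\ \tilde v+\tilde u\Delta\tau+\omega_v)\in\Omega_i$ for all $\omega_x\in J_{i,x}$, $\omega_v\in J_{i,v}$. Also $\Omega_0\subseteq\mathbb{S}_0$ and $\mu_0:\Omega_0\to I_0$ satisfies $v+\mu_0(v)\Delta\tau+\omega\in\Omega_0$ for all $v\in\Omega_0$ and all $\omega\in[w_{0,v,\min},w_{0,v,\max}]$. *)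

theory Defs
  imports "HOL-Analysis.Analysis"
begin

text \<open>Vectors indexed by {0..N} are represented as functions nat => real;
  only indices 0..N (resp. 1..N) are meaningful.\<close>

definition envelope :: "nat \<Rightarrow> real \<Rightarrow> real \<Rightarrow> nat \<Rightarrow> (real \<times> real) set" where
  "envelope N l L i = {(x, v). real i * l + (real i - 1) * ((L - real N * l) / real N) \<le> x
                          \<and> x \<le> real i * l + real i * ((L - real N * l) / real N)}"

definition admU :: "nat \<Rightarrow> (nat \<Rightarrow> real) \<Rightarrow> (nat \<Rightarrow> real) \<Rightarrow> (nat \<Rightarrow> real) set" where
  "admU N umin umax = {u. \<forall>i\<le>N. umin i \<le> u i \<and> u i \<le> umax i}"

definition relU :: "nat \<Rightarrow> (nat \<Rightarrow> real) \<Rightarrow> (nat \<Rightarrow> real) \<Rightarrow> (nat \<Rightarrow> real) set" where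
  "relU N umin umax = {ut. \<exists>u \<in> admU N umin umax. ut 0 = u 0 \<and> (\<forall>i\<in>{1..N}. ut i = u 0 - u i)}"

definition admW :: "nat \<Rightarrow> (nat \<Rightarrow> real) \<Rightarrow> (nat \<Rightarrow> real) \<Rightarrow> (nat \<Rightarrow> real) \<Rightarrow> (nat \<Rightarrow> real)
                     \<Rightarrow> ((nat \<Rightarrow> real) \<times> (nat \<Rightarrow> real)) set" where
  "admW N wxmin wxmax wvmin wvmax = {(wx, wv). \<forall>i\<le>N. wxmin i \<le> wx i \<and> wx i \<le> wxmax i
                                             \<and> wvmin i \<le> wv i \<and> wv i \<le> wvmax i}"

definition relW :: "nat \<Rightarrow> (nat \<Rightarrow> real) \<Rightarrow> (nat \<Rightarrow> real) \<Rightarrow> (nat \<Rightarrow> real) \<Rightarrow> (nat \<Rightarrow> real)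
                     \<Rightarrow> ((nat \<Rightarrow> real) \<times> (nat \<Rightarrow> real)) set" where
  "relW N wxmin wxmax wvmin wvmax = {(wxt, wvt). \<exists>(wx, wv) \<in> admW N wxmin wxmax wvmin wvmax.
        wxt 0 = wx 0 \<and> wvt 0 = wv 0 \<and>
        (\<forall>i\<in>{1..N}. wxt i = wx 0 - wx i \<and> wvt i = wv 0 - wv i)}"

definition feedback :: "(real \<Rightarrow> real) \<Rightarrow> (nat \<Rightarrow> real \<Rightarrow> real \<Rightarrow> real)
                        \<Rightarrow> (nat \<Rightarrow> real) \<Rightarrow> (nat \<Rightarrow> real) \<Rightarrow> real \<Rightarrow> nat \<Rightarrow> real" where
  "feedback mu0 mu xt vt v0 i = (if i = 0 then mu0 v0 else mu0 v0 - mu i (xt i) (vt i))"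

end

theory Submission
  imports Defs
begin

theorem proposition3:
  fixes N :: nat and l dt L v0min v0max :: real
    and umin umax wxmin wxmax wvmin wvmax :: "nat \<Rightarrow> real"
    and I Jx Jv :: "nat \<Rightarrow> real set"
    and Om :: "nat \<Rightarrow> (real \<times> real) set" and Om0 :: "real set"
    and mu :: "nat \<Rightarrow> real \<Rightarrow> real \<Rightarrow> real" and mu0 :: "real \<Rightarrow> real"
  assumes hN: "N \<ge> 1" and hl: "l > 0" and hdt: "dt > 0"
    and hL: "L > (real N + 1) * l" and hv0: "v0min \<le> v0max"
    and hI_int: "\<forall>i\<le>N. is_interval (I i)"
    and hI: "\<forall>ut. (\<forall>i\<le>N. ut i \<in> I i) \<longrightarrow> ut \<in> relU N umin umax"
    and hJ_int: "\<forall>i\<le>N. is_interval (Jx i) \<and> is_interval (Jv i)"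
    and hJ: "\<forall>(wxt, wvt) \<in> relW N wxmin wxmax wvmin wvmax. \<forall>i\<le>N. wxt i \<in> Jx i \<and> wvt i \<in> Jv i"
    and hOm: "\<forall>i\<in>{1..N}. Om i \<subseteq> envelope N l L i"
    and hmu: "\<forall>i\<in>{1..N}. \<forall>(x, v) \<in> Om i. mu i x v \<in> I i \<and>
                (\<forall>ox \<in> Jx i. \<forall>ov \<in> Jv i.
                   (x + v * dt + mu i x v * dt\<^sup>2 / 2 + ox, v + mu i x v * dt + ov) \<in> Om i)"
    and hOm0: "Om0 \<subseteq> {v0min..v0max}"
    and hmu0: "\<forall>v \<in> Om0. mu0 v \<in> I 0 \<and>
                (\<forall>w \<in> {wvmin 0..wvmax 0}. v + mu0 v * dt + w \<in> Om0)"
  shows "(\<forall>xt vt v0. (\<forall>i\<in>{1..N}. (xt i, vt i) \<in> Om i) \<and> v0 \<in> Om0 \<longrightarrow>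
            feedback mu0 mu xt vt v0 \<in> admU N umin umax)
     \<and> (\<forall>(X :: nat \<Rightarrow> nat \<Rightarrow> real) (V :: nat \<Rightarrow> nat \<Rightarrow> real) (V0 :: nat \<Rightarrow> real)
           (wx :: nat \<Rightarrow> nat \<Rightarrow> real) (wv :: nat \<Rightarrow> nat \<Rightarrow> real).
          (\<forall>i\<in>{1..N}. (X 0 i, V 0 i) \<in> Om i) \<and> V0 0 \<in> Om0
          \<and> (\<forall>k. (wx k, wv k) \<in> admW N wxmin wxmax wvmin wvmax)
          \<and> (\<forall>k. \<forall>i\<in>{1..N}.
               X (Suc k) i = X k i + V k i * dt
                   + (feedback mu0 mu (X k) (V k) (V0 k) 0 - feedback mu0 mu (X k) (V k) (V0 k) i) * dt\<^sup>2 / 2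
                   + wx k 0 - wx k i
             \<and> V (Suc k) i = V k i
                   + (feedback mu0 mu (X k) (V k) (V0 k) 0 - feedback mu0 mu (X k) (V k) (V0 k) i) * dt
                   + wv k 0 - wv k i)
          \<and> (\<forall>k. V0 (Suc k) = V0 k + feedback mu0 mu (X k) (V k) (V0 k) 0 * dt + wv k 0)
          \<longrightarrow> (\<forall>k. (\<forall>i\<in>{1..N}. X k i \<ge> (if i = 1 then 0 else X k (i - 1)) + l)
                   \<and> X k N \<le> L \<and> v0min \<le> V0 k \<and> V0 k \<le> v0max))"
proof (rule conjI; intro allI impI)
  fix xt vt v0
  assume A: "(\<forall>i\<in>{1..N}. (xt i, vt i) \<in> Om i) \<and> v0 \<in> Om0"
  define ut where "ut = (\<lambda>i. if i = 0 then mu0 v0 else mu i (xt i) (vt i))"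
  have "\<forall>i\<le>N. ut i \<in> I i"
  proof (intro allI impI)
    fix i assume "i \<le> N"
    show "ut i \<in> I i"
    proof (cases "i = 0")
      case True thus ?thesis using A hmu0 by (simp add: ut_def)
    next
      case False
      hence "i \<in> {1..N}" using \<open>i \<le> N\<close> by auto
      thus ?thesis using A hmu False by (fastforce simp: ut_def)
    qed
  qed
  hence "ut \<in> relU N umin umax" using hI by blast
  then obtain u where u: "u \<in> admU N umin umax" "ut 0 = u 0" "\<forall>i\<in>{1..N}. ut i = u 0 - u i"
    unfolding relU_def by blast
  have "\<forall>i\<le>N. feedback mu0 mu xt vt v0 i = u i"
  proof (intro allI impI)
    fix i assume "i \<le> N"
    show "feedback mu0 mu xt vt v0 i = u i"
    proof (cases "i = 0")
      case True thus ?thesis using u by (simp add: ut_def feedback_def)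
    next
      case False
      hence "i \<in> {1..N}" using \<open>i \<le> N\<close> by auto
      thus ?thesis using u False by (simp add: ut_def feedback_def)
    qed
  qed
  thus "feedback mu0 mu xt vt v0 \<in> admU N umin umax" using u(1) by (simp add: admU_def)
next
  fix X V :: "nat \<Rightarrow> nat \<Rightarrow> real" and V0 :: "nat \<Rightarrow> real" and wx wv :: "nat \<Rightarrow> nat \<Rightarrow> real"
  assume A: "(\<forall>i\<in>{1..N}. (X 0 i, V 0 i) \<in> Om i) \<and> V0 0 \<in> Om0
          \<and> (\<forall>k. (wx k, wv k) \<in> admW N wxmin wxmax wvmin wvmax)
          \<and> (\<forall>k. \<forall>i\<in>{1..N}.
               X (Suc k) i = X k i + V k i * dt
                   + (feedback mu0 mu (X k) (V k) (V0 k) 0 - feedback mu0 mu (X k) (V k) (V0 k) i) * dt\<^sup>2 / 2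
                   + wx k 0 - wx k i
             \<and> V (Suc k) i = V k i
                   + (feedback mu0 mu (X k) (V k) (V0 k) 0 - feedback mu0 mu (X k) (V k) (V0 k) i) * dt
                   + wv k 0 - wv k i)
          \<and> (\<forall>k. V0 (Suc k) = V0 k + feedback mu0 mu (X k) (V k) (V0 k) 0 * dt + wv k 0)"
  have W: "\<And>k. (wx k, wv k) \<in> admW N wxmin wxmax wvmin wvmax" using A by blast
  have J: "\<And>k i. i \<in> {1..N} \<Longrightarrow> wx k 0 - wx k i \<in> Jx i \<and> wv k 0 - wv k i \<in> Jv i"
  proof -
    fix k i assume i: "i \<in> {1..N}"
    define a where "a = (\<lambda>j. if j = 0 then wx k 0 else wx k 0 - wx k j)"
    define b where "b = (\<lambda>j. if j = 0 then wv k 0 else wv k 0 - wv k j)"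
    have "(a, b) \<in> relW N wxmin wxmax wvmin wvmax"
      unfolding relW_def using W[of k] by (auto simp: a_def b_def)
    hence "a i \<in> Jx i \<and> b i \<in> Jv i" using hJ i by fastforce
    thus "wx k 0 - wx k i \<in> Jx i \<and> wv k 0 - wv k i \<in> Jv i" using i by (simp add: a_def b_def)
  qed
  have inv: "(\<forall>i\<in>{1..N}. (X k i, V k i) \<in> Om i) \<and> V0 k \<in> Om0" for k
  proof (induction k)
    case 0 thus ?case using A by blast
  next
    case (Suc k)
    have st: "\<forall>i\<in>{1..N}.
               X (Suc k) i = X k i + V k i * dt + mu i (X k i) (V k i) * dt\<^sup>2 / 2 + (wx k 0 - wx k i)
             \<and> V (Suc k) i = V k i + mu i (X k i) (V k i) * dt + (wv k 0 - wv k i)"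
      using A by (auto simp: feedback_def)
    have s0: "V0 (Suc k) = V0 k + mu0 (V0 k) * dt + wv k 0" using A by (simp add: feedback_def)
    have "wv k 0 \<in> {wvmin 0..wvmax 0}" using W[of k] by (simp add: admW_def)
    hence "V0 (Suc k) \<in> Om0" using s0 Suc.IH hmu0 by simp
    moreover have "\<forall>i\<in>{1..N}. (X (Suc k) i, V (Suc k) i) \<in> Om i"
    proof
      fix i assume i: "i \<in> {1..N}"
      have m: "(X k i, V k i) \<in> Om i" using Suc.IH i by blast
      have "\<forall>ox \<in> Jx i. \<forall>ov \<in> Jv i.
                   (X k i + V k i * dt + mu i (X k i) (V k i) * dt\<^sup>2 / 2 + ox, V k i + mu i (X k i) (V k i) * dt + ov) \<in> Om i"
        using hmu i m by fastforce
      thus "(X (Suc k) i, V (Suc k) i) \<in> Om i" using J[OF i, of k] st i by simp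
    qed
    ultimately show ?case by blast
  qed
  fix k
  define d where "d = (L - real N * l) / real N"
  have env: "\<And>i. i \<in> {1..N} \<Longrightarrow> real i * l + (real i - 1) * d \<le> X k i \<and> X k i \<le> real i * l + real i * d"
  proof -
    fix i assume i: "i \<in> {1..N}"
    hence "(X k i, V k i) \<in> envelope N l L i" using inv[of k] hOm by blast
    thus "real i * l + (real i - 1) * d \<le> X k i \<and> X k i \<le> real i * l + real i * d"
      by (simp add: envelope_def d_def)
  qed
  have "\<forall>i\<in>{1..N}. X k i \<ge> (if i = 1 then 0 else X k (i - 1)) + l"
  proof
    fix i assume i: "i \<in> {1..N}"
    show "X k i \<ge> (if i = 1 then 0 else X k (i - 1)) + l"
    proof (cases "i = 1")
      case True thus ?thesis using env[OF i] by simp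
    next
      case False
      hence i1: "i - 1 \<in> {1..N}" and r: "real (i - 1) = real i - 1" using i by auto
      show ?thesis using env[OF i] env[OF i1] False r by (simp add: algebra_simps)
    qed
  qed
  moreover have "X k N \<le> L"
  proof -
    have "N \<in> {1..N}" using hN by auto
    hence "X k N \<le> real N * l + real N * d" using env by blast
    also have "\<dots> = L" using hN by (simp add: d_def)
    finally show ?thesis .
  qed
  moreover have "v0min \<le> V0 k \<and> V0 k \<le> v0max" using inv[of k] hOm0 by auto
  ultimately show "(\<forall>i\<in>{1..N}. X k i \<ge> (if i = 1 then 0 else X k (i - 1)) + l)
                   \<and> X k N \<le> L \<and> v0min \<le> V0 k \<and> V0 k \<le> v0max" by blast
qed

end
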